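(* For every $j\in[N-1]$ and $\lambda\in\{0,1\}^N$ one has ${\bf s}_j(\mathbb{b}(\lambda))=\mathbb{b}(s_j\lambda)$, and, for the extension of ${\bf s}_j$ to $\mathbb{V}_N^{\mathrm{loc}}$, ${\bf s}_j(\mathbb{b}_\lambda)=\mathbb{b}_{s_j\lambda}$.
   Context: Fix $N\ge2$. $V=\mathbb{C}^2$ with basis $v_0,v_1$, ${\bf P}=\mathbb{C}[t_1,\dots,t_N]$, $\mathbb{V}_N=V^{\otimes N}\otimes{\bf P}$ with basis $v_\lambda$, $\lambda\in\{0,1\}^N$. Matrices on $V\otimes V$ are in the ordered basis $v_0\otimes v_0,v_0\otimes v_1,v_1\otimes v_0,v_1\otimes v_1$ (columns = images); $L(x,t)=\begin{pmatrix}1&0&0&0\\0&x+t&1&0\\0&1&0&0\\0&0&0&1\end{pmatrix}$. On $V[x]\otimes\mathbb{V}_N$ (factors $0,\dots,N$) let $M(x)=L_{0N}(x,t_N)\cdots L_{01}(x,t_1)$, $L_{0j}(x,t_j)$ acting as $L(x,t_j)$ on factors $0,j$ (factor $0$ first); define the ${\bf P}[x]$-linear operator $C(x)$ on $\mathbb{V}_N[x]$ by $M(x)(v_0\otimes w)=v_0\otimes A(x)w+v_1\otimes C(x)w$. For $\lambda\in\{0,1\}^N$ let $I_0=\{i_1<\dots<i_k\}=\{i:\lambda_i=0\}$ and $\mathbb{b}(\lambda)=C(-t_{i_1})\cdots C(-t_{i_k})v_{(1,\dots,1)}\in\mathbb{V}_N$. Let ${\bf P}^{\mathrm{loc}}={\bf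 P}[(t_a-t_b)^{-1}:a\ne b]$, $\mathbb{V}_N^{\mathrm{loc}}=V^{\otimes N}\otimes{\bf P}^{\mathrm{loc}}$, and $\mathbb{b}_\lambda=\prod_{b\in I_0,\,a\notin I_0}(t_a-t_b)^{-1}\,\mathbb{b}(\lambda)$. The operator ${\bf s}_j$ on $\mathbb{V}_N$ (and on $\mathbb{V}_N^{\mathrm{loc}}$) is defined by ${\bf s}_j(fv_\lambda)=s_j(f)\,(v_\lambda+(t_j-t_{j+1})v_{s_j\lambda})$ if $\lambda_j<\lambda_{j+1}$ and ${\bf s}_j(fv_\lambda)=s_j(f)v_\lambda$ otherwise, where $s_j\lambda$ swaps $\lambda_j,\lambda_{j+1}$ and $s_j(f)$ swaps $t_j,t_{j+1}$. *)

theory Defs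
  imports Complex_Main
begin

(* Basis index lambda in {0,1}^N: a bool list of length N, entry i (1-based) is lam!(i-1),
   False = 0, True = 1.  An element of V^{\<otimes>N} with coefficients in a ring of functions
   is represented pointwise: the variables t_1..t_N are a point t :: nat \<Rightarrow> complex
   (t i for i = 1..N), and a vector is a coefficient map bool list \<Rightarrow> complex. *)

type_synonym vec = "bool list \<Rightarrow> complex"
type_synonym vec0 = "bool \<times> bool list \<Rightarrow> complex"  (* V \<otimes> V^{\<otimes>N}, factor 0 first *)

definition basis :: "bool list \<Rightarrow> vec" where
  "basis lam = (\<lambda>mu. if mu = lam then 1 else 0)"

(* matrix entries of L(x,t) with y = x + t, row r, column c, in basis
   v0v0, v0v1, v1v0, v1v1 (columns = images) *)
definition Lent :: "complex \<Rightarrow> bool \<times> bool \<Rightarrow> bool \<times> bool \<Rightarrow> complex" where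
  "Lent y r c =
    (if c = (False, False) then (if r = (False, False) then 1 else 0)
     else if c = (False, True) then
       (if r = (False, True) then y else if r = (True, False) then 1 else 0)
     else if c = (True, False) then (if r = (False, True) then 1 else 0)
     else (if r = (True, True) then 1 else 0))"

(* L_{0j}(x,t_j), acting on factors 0 and j; y = x + t_j *)
definition Lop :: "complex \<Rightarrow> nat \<Rightarrow> vec0 \<Rightarrow> vec0" where
  "Lop y j W = (\<lambda>(b, mu). \<Sum>a\<in>UNIV. \<Sum>c\<in>UNIV.
      Lent y (b, mu ! (j - 1)) (a, c) * W (a, mu[j - 1 := c]))"

(* Mk k = L_{0k} ... L_{01};  M(x) = Mk N *)
fun Mk :: "complex \<Rightarrow> (nat \<Rightarrow> complex) \<Rightarrow> nat \<Rightarrow> vec0 \<Rightarrow> vec0" where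
  "Mk x t 0 W = W"
| "Mk x t (Suc k) W = Lop (x + t (Suc k)) (Suc k) (Mk x t k W)"

(* C(x) w defined by M(x)(v0 \<otimes> w) = v0 \<otimes> A(x) w + v1 \<otimes> C(x) w *)
definition Cop :: "nat \<Rightarrow> (nat \<Rightarrow> complex) \<Rightarrow> complex \<Rightarrow> vec \<Rightarrow> vec" where
  "Cop N t x w = (\<lambda>mu. Mk x t N (\<lambda>(a, lam). if a then 0 else w lam) (True, mu))"

definition I0 :: "bool list \<Rightarrow> nat list" where
  "I0 lam = filter (\<lambda>i. \<not> lam ! (i - 1)) [1..<length lam + 1]"

definition bb :: "nat \<Rightarrow> bool list \<Rightarrow> (nat \<Rightarrow> complex) \<Rightarrow> vec" where
  "bb N lam t = foldr (\<lambda>i w. Cop N t (- t i) w) (I0 lam) (basis (replicate N True))"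

(* normalized bb_lambda (element of the localization), at a point t with distinct coordinates *)
definition bbn :: "nat \<Rightarrow> bool list \<Rightarrow> (nat \<Rightarrow> complex) \<Rightarrow> vec" where
  "bbn N lam t = (\<lambda>mu. inverse (\<Prod>(a, b)\<in>{(a, b). a \<in> {1..N} \<and> b \<in> {1..N}
        \<and> \<not> lam ! (b - 1) \<and> lam ! (a - 1)}. (t a - t b)) * bb N lam t mu)"

definition swapt :: "nat \<Rightarrow> (nat \<Rightarrow> complex) \<Rightarrow> (nat \<Rightarrow> complex)" where
  "swapt j t = t(j := t (j + 1), j + 1 := t j)"

definition swapl :: "nat \<Rightarrow> bool list \<Rightarrow> bool list" where
  "swapl j lam = lam[j - 1 := lam ! j, j := lam ! (j - 1)]"

(* the operator s_j on a vector-valued function F of t: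
   s_j(f v_lam) = s_j(f) (v_lam + (t_j - t_{j+1}) v_{s_j lam}) if lam_j < lam_{j+1},
   s_j(f) v_lam otherwise *)
definition sop :: "nat \<Rightarrow> ((nat \<Rightarrow> complex) \<Rightarrow> vec) \<Rightarrow> ((nat \<Rightarrow> complex) \<Rightarrow> vec)" where
  "sop j F = (\<lambda>t mu. F (swapt j t) mu
      + (if mu ! (j - 1) \<and> \<not> mu ! j
         then (t j - t (j + 1)) * F (swapt j t) (swapl j mu) else 0))"

end

theory Submission
  imports Defs
begin


lemma Lop_eq: "Lop y j W (b, mu) = (if b then (if mu!(j-1) then W(True, mu[j-1:=True]) else W(False, mu[j-1:=True]))
   else (if mu!(j-1) then y * W(False, mu[j-1:=True]) + W(True, mu[j-1:=False]) else W(False, mu[j-1:=False])))"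
  unfolding Lop_def Lent_def by (simp add: UNIV_bool)

definition Rs :: "nat \<Rightarrow> complex \<Rightarrow> vec0 \<Rightarrow> vec0" where
  "Rs j c V = (\<lambda>(a, mu). V (a, mu) + (if mu ! (j - 1) \<and> \<not> mu ! j then c * V (a, swapl j mu) else 0))"

definition Rv :: "nat \<Rightarrow> complex \<Rightarrow> vec \<Rightarrow> vec" where
  "Rv j c w = (\<lambda>mu. w mu + (if mu ! (j - 1) \<and> \<not> mu ! j then c * w (swapl j mu) else 0))"

definition inj0 :: "vec \<Rightarrow> vec0" where
  "inj0 w = (\<lambda>(a, lam). if a then 0 else w lam)"

lemma Cop_inj0: "Cop N t x w = (\<lambda>mu. Mk x t N (inj0 w) (True, mu))"
  unfolding Cop_def inj0_def by simp

lemma A2: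
  assumes "1 \<le> j" "j < length mu"
  shows "Rs j (s - r) (Lop (x + s) (j+1) (Lop (x + r) j W)) (b, mu)
       = Lop (x + r) (j+1) (Lop (x + s) j (Rs j (s - r) W)) (b, mu)"
proof -
  obtain i where i: "j = Suc i" using assms by (cases j) auto
  have li: "i < length mu" "Suc i < length mu" using assms i by auto
  show ?thesis using li unfolding i Rs_def swapl_def
    by (cases b; cases "mu!i"; cases "mu!Suc i") (simp_all add: Lop_eq list_update_swap algebra_simps)
qed

lemma A1:
  assumes "1 \<le> j" "1 \<le> k" "k \<noteq> j" "k \<noteq> j + 1"
  shows "Rs j c (Lop y k W) = Lop y k (Rs j c W)"
proof (rule ext, clarify)
  fix b mu
  obtain i where i: "j = Suc i" using assms by (cases j) auto
  obtain m where m: "k = Suc m" using assms by (cases k) auto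
  have d: "m \<noteq> i" "m \<noteq> Suc i" using assms i m by auto
  show "Rs j c (Lop y k W) (b, mu) = Lop y k (Rs j c W) (b, mu)"
    using d unfolding i m Rs_def swapl_def
    by (cases b; cases "mu!i"; cases "mu!Suc i"; cases "mu!m") (simp_all add: Lop_eq list_update_swap algebra_simps)
qed

lemma Lop_cong:
  assumes "\<And>a nu. length nu = n \<Longrightarrow> V (a, nu) = U (a, nu)" "length mu = n"
  shows "Lop y k V (b, mu) = Lop y k U (b, mu)"
  using assms by (simp add: Lop_eq)

lemma Mk_cong:
  assumes "\<And>a nu. length nu = n \<Longrightarrow> V (a, nu) = U (a, nu)" "length mu = n"
  shows "Mk x t k V (b, mu) = Mk x t k U (b, mu)"
  using assms(2)
proof (induction k arbitrary: b mu)
  case 0 then show ?case using assms(1) by simp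
next
  case (Suc k)
  have "Lop (x + t (Suc k)) (Suc k) (Mk x t k V) (b, mu) = Lop (x + t (Suc k)) (Suc k) (Mk x t k U) (b, mu)"
    by (rule Lop_cong[where n=n]) (use Suc in auto)
  then show ?case by simp
qed

lemma Mk_agree: "(\<And>i. 1 \<le> i \<Longrightarrow> i \<le> k \<Longrightarrow> t' i = t i) \<Longrightarrow> Mk x t' k W = Mk x t k W"
  by (induction k) auto

lemma Mk_low: "1 \<le> j \<Longrightarrow> k < j \<Longrightarrow> Rs j c (Mk x t k W) = Mk x t k (Rs j c W)"
  by (induction k) (auto simp: A1)

lemma swapt_eq: "swapt j t i = t (if i = j then j+1 else if i = j+1 then j else i)"
  by (simp add: swapt_def)

lemma Mk_high:
  assumes "1 \<le> j" "j < n" "length mu = n" "j + 1 \<le> k"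
  shows "Rs j (t j - t (j+1)) (Mk x (swapt j t) k W) (b, mu) = Mk x t k (Rs j (t j - t (j+1)) W) (b, mu)"
  using assms(4) assms(3)
proof (induction k arbitrary: b mu rule: dec_induct)
  case base
  obtain i where i: "j = Suc i" using assms by (cases j) auto
  have e1: "Mk x (swapt j t) i W = Mk x t i W"
    by (rule Mk_agree) (auto simp: swapt_def i)
  have e2: "Rs j (t j - t (j+1)) (Mk x t i W) = Mk x t i (Rs j (t j - t (j+1)) W)"
    by (rule Mk_low) (use i in auto)
  have "Rs j (t j - t (j+1)) (Mk x (swapt j t) (j+1) W) (b, mu)
      = Rs j (t j - t (j+1)) (Lop (x + t j) (j+1) (Lop (x + t (j+1)) j (Mk x t i W))) (b, mu)"
    using e1 by (simp add: i swapt_eq)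
  also have "\<dots> = Lop (x + t (j+1)) (j+1) (Lop (x + t j) j (Rs j (t j - t (j+1)) (Mk x t i W))) (b, mu)"
    by (rule A2) (use assms base in auto)
  also have "\<dots> = Mk x t (j+1) (Rs j (t j - t (j+1)) W) (b, mu)"
    using e2 by (simp add: i)
  finally show ?case .
next
  case (step k)
  have "Rs j (t j - t (j+1)) (Mk x (swapt j t) (Suc k) W) (b, mu)
     = Rs j (t j - t (j+1)) (Lop (x + t (Suc k)) (Suc k) (Mk x (swapt j t) k W)) (b, mu)"
    using step by (simp add: swapt_eq)
  also have "\<dots> = Lop (x + t (Suc k)) (Suc k) (Rs j (t j - t (j+1)) (Mk x (swapt j t) k W)) (b, mu)"
    using step assms by (simp add: A1)
  also have "\<dots> = Lop (x + t (Suc k)) (Suc k) (Mk x t k (Rs j (t j - t (j+1)) W)) (b, mu)"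
    by (rule Lop_cong[where n=n]) (use step in auto)
  finally show ?case by simp
qed

lemma Rs_inj0: "Rs j c (inj0 w) = inj0 (Rv j c w)"
  unfolding Rs_def inj0_def Rv_def by auto

lemma Cop_Rv:
  assumes "1 \<le> j" "j < n" "length mu = n"
  shows "Rv j (t j - t (j+1)) (Cop n (swapt j t) x w) mu = Cop n t x (Rv j (t j - t (j+1)) w) mu"
proof -
  have "Rv j (t j - t (j+1)) (Cop n (swapt j t) x w) mu
      = Rs j (t j - t (j+1)) (Mk x (swapt j t) n (inj0 w)) (True, mu)"
    unfolding Rv_def Rs_def Cop_inj0 by simp
  also have "\<dots> = Mk x t n (Rs j (t j - t (j+1)) (inj0 w)) (True, mu)"
    by (rule Mk_high) (use assms in auto)
  finally show ?thesis by (simp add: Rs_inj0 Cop_inj0)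
qed

lemma Cop_cong:
  assumes "\<And>nu. length nu = n \<Longrightarrow> v nu = w nu" "length mu = n"
  shows "Cop n t x v mu = Cop n t x w mu"
  unfolding Cop_inj0 by (rule Mk_cong[where n=n]) (use assms in \<open>auto simp: inj0_def\<close>)



type_synonym vec00 = "bool \<times> bool \<times> bool list \<Rightarrow> complex"

definition L1 :: "complex \<Rightarrow> nat \<Rightarrow> vec00 \<Rightarrow> vec00" where
  "L1 y k V = (\<lambda>(a, a', mu). Lop y k (\<lambda>(b, nu). V (b, a', nu)) (a, mu))"
definition L2 :: "complex \<Rightarrow> nat \<Rightarrow> vec00 \<Rightarrow> vec00" where
  "L2 y k V = (\<lambda>(a, a', mu). Lop y k (\<lambda>(b, nu). V (a, b, nu)) (a', mu))"
definition M1 :: "complex \<Rightarrow> (nat \<Rightarrow> complex) \<Rightarrow> nat \<Rightarrow> vec00 \<Rightarrow> vec00" where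
  "M1 x t k V = (\<lambda>(a, a', mu). Mk x t k (\<lambda>(b, nu). V (b, a', nu)) (a, mu))"
definition M2 :: "complex \<Rightarrow> (nat \<Rightarrow> complex) \<Rightarrow> nat \<Rightarrow> vec00 \<Rightarrow> vec00" where
  "M2 x t k V = (\<lambda>(a, a', mu). Mk x t k (\<lambda>(b, nu). V (a, b, nu)) (a', mu))"
definition Rd :: "complex \<Rightarrow> vec00 \<Rightarrow> vec00" where
  "Rd c V = (\<lambda>(a, a', mu). V (a, a', mu) + (if a \<and> \<not> a' then c * V (False, True, mu) else 0))"

fun D :: "complex \<Rightarrow> complex \<Rightarrow> (nat \<Rightarrow> complex) \<Rightarrow> nat \<Rightarrow> vec00 \<Rightarrow> vec00" where
  "D x y t 0 V = V"
| "D x y t (Suc k) V = L1 (x + t (Suc k)) (Suc k) (L2 (y + t (Suc k)) (Suc k) (D x y t k V))"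

lemma M1_Suc: "M1 x t (Suc k) V = L1 (x + t (Suc k)) (Suc k) (M1 x t k V)"
  unfolding M1_def L1_def by (auto simp: case_prod_beta')

lemma M1_0: "M1 x t 0 V = V"
  unfolding M1_def by auto

lemma M2_Suc: "M2 x t (Suc k) V = L2 (x + t (Suc k)) (Suc k) (M2 x t k V)"
  unfolding M2_def L2_def by (auto simp: case_prod_beta')

lemma L12_comm:
  assumes "1 \<le> m" "1 \<le> k" "m \<noteq> k"
  shows "L1 y m (L2 z k V) = L2 z k (L1 y m V)"
proof (rule ext, clarify)
  fix a a' mu
  obtain i where i: "m = Suc i" using assms by (cases m) auto
  obtain l where l: "k = Suc l" using assms by (cases k) auto
  have d: "i \<noteq> l" using assms i l by auto
  show "L1 y m (L2 z k V) (a, a', mu) = L2 z k (L1 y m V) (a, a', mu)"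
    using d unfolding i l L1_def L2_def
    by (cases a; cases a'; cases "mu!i"; cases "mu!l") (simp_all add: Lop_eq list_update_swap algebra_simps)
qed

lemma RLL:
  assumes "1 \<le> k" "k \<le> length mu"
  shows "Rd (x - y) (L1 (x + s) k (L2 (y + s) k V)) (a, a', mu)
       = L1 (y + s) k (L2 (x + s) k (Rd (x - y) V)) (a, a', mu)"
proof -
  obtain i where i: "k = Suc i" using assms by (cases k) auto
  have li: "i < length mu" using assms i by auto
  show ?thesis using li unfolding i L1_def L2_def Rd_def
    by (cases a; cases a'; cases "mu!i") (simp_all add: Lop_eq algebra_simps)
qed


lemma M1_L2: "m > k \<Longrightarrow> M1 x t k (L2 z m V) = L2 z m (M1 x t k V)"
  by (induction k) (simp_all add: M1_0 M1_Suc L12_comm)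

lemma M1M2_D: "M1 x t k (M2 y t k V) = D x y t k V"
proof (induction k)
  case 0 then show ?case by (simp add: M1_0 M2_def case_prod_beta')
next
  case (Suc k) then show ?case by (simp add: M1_Suc M2_Suc M1_L2)
qed

lemma L1_cong:
  assumes "\<And>a a' nu. length nu = n \<Longrightarrow> V (a, a', nu) = U (a, a', nu)" "length mu = n"
  shows "L1 y k V (a, a', mu) = L1 y k U (a, a', mu)"
  unfolding L1_def using assms by (simp add: Lop_eq)

lemma L2_cong:
  assumes "\<And>a a' nu. length nu = n \<Longrightarrow> V (a, a', nu) = U (a, a', nu)" "length mu = n"
  shows "L2 y k V (a, a', mu) = L2 y k U (a, a', mu)"
  unfolding L2_def using assms by (simp add: Lop_eq)

lemma D_RLL:
  assumes "k \<le> length mu"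
  shows "Rd (x - y) (D x y t k V) (a, a', mu) = D y x t k (Rd (x - y) V) (a, a', mu)"
  using assms
proof (induction k arbitrary: a a' mu)
  case 0 then show ?case by simp
next
  case (Suc k)
  have "Rd (x - y) (D x y t (Suc k) V) (a, a', mu)
      = L1 (y + t (Suc k)) (Suc k) (L2 (x + t (Suc k)) (Suc k) (Rd (x - y) (D x y t k V))) (a, a', mu)"
    using RLL[of "Suc k" mu x y "t (Suc k)" "D x y t k V" a a'] Suc.prems by simp
  also have "\<dots> = L1 (y + t (Suc k)) (Suc k) (L2 (x + t (Suc k)) (Suc k) (D y x t k (Rd (x - y) V))) (a, a', mu)"
    by (rule L1_cong[where n="length mu"], rule L2_cong[where n="length mu"]) (use Suc in auto)
  finally show ?case by simp
qed

lemma Lop_zero: "Lop y k (\<lambda>_. 0) = (\<lambda>_. 0)"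
  unfolding Lop_def by auto

lemma Mk_zero: "Mk x t k (\<lambda>_. 0) = (\<lambda>_. 0)"
  by (induction k) (simp_all add: Lop_zero)

definition V0 :: "vec \<Rightarrow> vec00" where
  "V0 w = (\<lambda>(a, a', nu). if a \<or> a' then 0 else w nu)"

lemma CC_D: "Cop n t x (Cop n t y w) mu = D x y t n (V0 w) (True, True, mu)"
proof -
  have e: "(\<lambda>(b, nu). M2 y t n (V0 w) (b, True, nu)) = inj0 (Cop n t y w)"
  proof (rule ext, clarify)
    fix b nu
    show "M2 y t n (V0 w) (b, True, nu) = inj0 (Cop n t y w) (b, nu)"
    proof (cases b)
      case True
      have "(\<lambda>(b', nu'). V0 w (True, b', nu')) = (\<lambda>_. 0)" by (auto simp: V0_def)
      then show ?thesis using True by (simp add: M2_def inj0_def Mk_zero)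
    next
      case False
      have "(\<lambda>(b', nu'). V0 w (False, b', nu')) = inj0 w" by (auto simp: V0_def inj0_def)
      then show ?thesis using False by (simp add: M2_def inj0_def Cop_inj0)
    qed
  qed
  have "D x y t n (V0 w) (True, True, mu) = M1 x t n (M2 y t n (V0 w)) (True, True, mu)"
    by (simp add: M1M2_D)
  also have "\<dots> = Mk x t n (inj0 (Cop n t y w)) (True, mu)"
    unfolding M1_def using e by simp
  finally show ?thesis by (simp add: Cop_inj0)
qed

lemma Cop_comm:
  assumes "length mu = n"
  shows "Cop n t x (Cop n t y w) mu = Cop n t y (Cop n t x w) mu"
proof -
  have r0: "Rd (x - y) (V0 w) = V0 w" by (auto simp: Rd_def V0_def)
  have "Cop n t y (Cop n t x w) mu = D y x t n (Rd (x - y) (V0 w)) (True, True, mu)"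
    by (simp add: CC_D r0)
  also have "\<dots> = Rd (x - y) (D x y t n (V0 w)) (True, True, mu)"
    using D_RLL[of n mu x y t "V0 w" True True] assms by simp
  also have "\<dots> = Cop n t x (Cop n t y w) mu"
    by (simp add: Rd_def CC_D)
  finally show ?thesis by simp
qed



definition sig :: "nat \<Rightarrow> nat \<Rightarrow> nat" where
  "sig j i = (if i = j then j + 1 else if i = j + 1 then j else i)"

lemma swapt_sig: "swapt j t i = t (sig j i)"
  by (simp add: swapt_eq sig_def)

lemma sig_sig: "sig j (sig j i) = i"
  by (simp add: sig_def)

lemma foldr_cong:
  assumes "\<And>nu. length nu = N \<Longrightarrow> v nu = w nu" "length mu = N"
  shows "foldr (\<lambda>i w. Cop N t (g i) w) is v mu = foldr (\<lambda>i w. Cop N t (g i) w) is w mu"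
  using assms(2)
proof (induction "is" arbitrary: mu)
  case Nil then show ?case using assms(1) by simp
next
  case (Cons i "is")
  show ?case by simp (rule Cop_cong[where n=N], use Cons in auto)
qed

lemma B1:
  assumes "1 \<le> j" "j < N" "length mu = N"
  shows "Rv j (t j - t (j+1)) (foldr (\<lambda>i w. Cop N (swapt j t) (g i) w) is e) mu
       = foldr (\<lambda>i w. Cop N t (g i) w) is (Rv j (t j - t (j+1)) e) mu"
  using assms(3)
proof (induction "is" arbitrary: mu)
  case Nil then show ?case by simp
next
  case (Cons i "is")
  have "Rv j (t j - t (j+1)) (foldr (\<lambda>i w. Cop N (swapt j t) (g i) w) (i # is) e) mu
      = Cop N t (g i) (Rv j (t j - t (j+1)) (foldr (\<lambda>i w. Cop N (swapt j t) (g i) w) is e)) mu"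
    using Cop_Rv[OF assms(1,2) Cons.prems] by simp
  also have "\<dots> = foldr (\<lambda>i w. Cop N t (g i) w) (i # is) (Rv j (t j - t (j+1)) e) mu"
    by simp (rule Cop_cong[where n=N], use Cons in auto)
  finally show ?case .
qed

lemma Rv_basis:
  assumes "1 \<le> j" "j < N" "length mu = N"
  shows "Rv j c (basis (replicate N True)) mu = basis (replicate N True) mu"
proof -
  have "mu ! j = False \<Longrightarrow> swapl j mu \<noteq> replicate N True"
  proof
    assume a: "mu ! j = False" "swapl j mu = replicate N True"
    have "swapl j mu ! (j - 1) = mu ! j" using assms unfolding swapl_def by (simp add: nth_list_update)
    then show False using a assms by simp
  qed
  then show ?thesis unfolding Rv_def basis_def by auto
qed

lemma nth_swapl:
  assumes "length lam = N" "1 \<le> j" "j < N" "1 \<le> i" "i \<le> N"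
  shows "swapl j lam ! (i - 1) = lam ! (sig j i - 1)"
  using assms unfolding swapl_def sig_def by (auto simp: nth_list_update)

lemma upt_split:
  assumes "1 \<le> j" "j < N"
  shows "[1..<N+1] = [1..<j] @ j # (j+1) # [j+2..<N+1]"
proof -
  have "[1..<N+1] = [1..<j] @ [j..<N+1]" using assms
    by (metis le_add_diff_inverse less_imp_le_nat add_le_mono1 upt_add_eq_append le_Suc_eq Suc_eq_plus1 order_trans)
  also have "[j..<N+1] = j # (j+1) # [j+2..<N+1]" using assms by (simp add: upt_conv_Cons)
  finally show ?thesis .
qed

lemma part1:
  assumes "1 \<le> j" "j < N" "length lam = N" "length mu = N"
  shows "sop j (bb N lam) t mu = bb N (swapl j lam) t mu"
proof -
  define f where "f = (\<lambda>i w. Cop N t (- t i) w)"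
  define e where "e = basis (replicate N True)"
  have "sop j (bb N lam) t mu = Rv j (t j - t (j+1)) (bb N lam (swapt j t)) mu"
    unfolding sop_def Rv_def by simp
  also have "\<dots> = foldr (\<lambda>i w. Cop N t (- swapt j t i) w) (I0 lam) (Rv j (t j - t (j+1)) e) mu"
    unfolding bb_def e_def by (rule B1) (use assms in auto)
  also have "\<dots> = foldr (\<lambda>i w. Cop N t (- swapt j t i) w) (I0 lam) e mu"
    by (rule foldr_cong[where N=N]) (use assms Rv_basis in \<open>auto simp: e_def\<close>)
  also have "\<dots> = foldr f (map (sig j) (I0 lam)) e mu"
    by (simp add: foldr_map f_def swapt_sig o_def)
  finally have s1: "sop j (bb N lam) t mu = foldr f (map (sig j) (I0 lam)) e mu" .
  define P where "P = (\<lambda>i. \<not> lam ! (i - 1))"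
  define P' where "P' = (\<lambda>i. \<not> swapl j lam ! (i - 1))"
  define A where "A = filter P [1..<j]"
  define B where "B = filter P [j+2..<N+1]"
  have lsw: "length (swapl j lam) = N" using assms by (simp add: swapl_def)
  have I0a: "I0 lam = A @ filter P [j, j+1] @ B"
    unfolding I0_def A_def B_def P_def using upt_split[OF assms(1,2)] assms(3) by simp
  have fA: "filter P' [1..<j] = A" unfolding A_def P'_def P_def
    by (rule filter_cong) (use assms in \<open>auto simp: swapl_def nth_list_update\<close>)
  have fB: "filter P' [j+2..<N+1] = B" unfolding B_def P'_def P_def
    by (rule filter_cong) (use assms in \<open>auto simp: swapl_def nth_list_update\<close>)
  have I0b: "I0 (swapl j lam) = A @ filter P' [j, j+1] @ B"
    unfolding I0_def using upt_split[OF assms(1,2)] lsw fA fB by (simp add: P'_def)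
  have mA: "map (sig j) A = A" by (rule map_idI) (auto simp: A_def sig_def)
  have mB: "map (sig j) B = B" by (rule map_idI) (auto simp: B_def sig_def)
  have sw1: "swapl j lam ! (j - 1) = lam ! j" and sw2: "swapl j lam ! j = lam ! (j - 1)"
    using assms unfolding swapl_def by (auto simp: nth_list_update)
  have mid: "foldr f (map (sig j) (filter P [j, j+1])) z nu = foldr f (filter P' [j, j+1]) z nu"
    if "length nu = N" for z nu
  proof (cases "lam ! (j - 1)"; cases "lam ! j")
    assume "\<not> lam ! (j - 1)" "\<not> lam ! j"
    then show ?thesis using sw1 sw2 that Cop_comm[of nu N t "- t j" "- t (j+1)" z]
      by (simp add: P_def P'_def f_def sig_def)
  qed (use sw1 sw2 in \<open>auto simp: P_def P'_def f_def sig_def\<close>)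
  have "foldr f (map (sig j) (I0 lam)) e mu = foldr f A (foldr f (map (sig j) (filter P [j, j+1])) (foldr f B e)) mu"
    by (simp add: I0a mA mB)
  also have "\<dots> = foldr f A (foldr f (filter P' [j, j+1]) (foldr f B e)) mu"
    unfolding f_def by (rule foldr_cong[where N=N]) (use mid assms in \<open>auto simp: f_def\<close>)
  also have "\<dots> = foldr f (I0 (swapl j lam)) e mu"
    by (simp add: I0b)
  finally show ?thesis using s1 by (simp add: bb_def f_def e_def)
qed


definition Sset :: "nat \<Rightarrow> bool list \<Rightarrow> (nat \<times> nat) set" where
  "Sset N lam = {(a, b). a \<in> {1..N} \<and> b \<in> {1..N} \<and> \<not> lam ! (b - 1) \<and> lam ! (a - 1)}"

lemma sig_range: "1 \<le> j \<Longrightarrow> j < N \<Longrightarrow> (sig j a \<in> {1..N}) = (a \<in> {1..N})"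
  by (auto simp: sig_def)

lemma prod_swap:
  assumes "1 \<le> j" "j < N" "length lam = N"
  shows "(\<Prod>(a, b)\<in>Sset N lam. swapt j t a - swapt j t b) = (\<Prod>(a, b)\<in>Sset N (swapl j lam). t a - t b)"
proof -
  define h where "h = (\<lambda>(a, b). (sig j a, sig j b))"
  have hh: "h (h x) = x" for x by (cases x) (simp add: h_def sig_sig)
  have mem: "x \<in> Sset N (swapl j lam) \<longleftrightarrow> h x \<in> Sset N lam" for x
  proof (cases x)
    case (Pair a b)
    show ?thesis
    proof (cases "a \<in> {1..N} \<and> b \<in> {1..N}")
      case True
      then show ?thesis using Pair nth_swapl[OF assms(3,1,2), of a] nth_swapl[OF assms(3,1,2), of b]
        sig_range[OF assms(1,2), of a] sig_range[OF assms(1,2), of b]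
        by (auto simp: Sset_def h_def)
    next
      case False
      then show ?thesis using Pair sig_range[OF assms(1,2), of a] sig_range[OF assms(1,2), of b]
        by (auto simp: Sset_def h_def)
    qed
  qed
  have img: "Sset N (swapl j lam) = h ` Sset N lam"
  proof
    show "Sset N (swapl j lam) \<subseteq> h ` Sset N lam"
    proof
      fix x assume "x \<in> Sset N (swapl j lam)"
      then have "h x \<in> Sset N lam" using mem by simp
      then show "x \<in> h ` Sset N lam" using hh[of x] by (metis image_eqI)
    qed
  next
    show "h ` Sset N lam \<subseteq> Sset N (swapl j lam)"
    proof
      fix x assume "x \<in> h ` Sset N lam"
      then obtain y where y: "y \<in> Sset N lam" "x = h y" by blast
      then have "h x \<in> Sset N lam" using hh by simp
      then show "x \<in> Sset N (swapl j lam)" using mem by simp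
    qed
  qed
  have inj: "inj_on h (Sset N lam)" by (rule inj_onI) (metis hh)
  have "(\<Prod>(a, b)\<in>Sset N (swapl j lam). t a - t b) = prod ((\<lambda>(a, b). t a - t b) \<circ> h) (Sset N lam)"
    unfolding img by (rule prod.reindex[OF inj])
  also have "\<dots> = (\<Prod>(a, b)\<in>Sset N lam. swapt j t a - swapt j t b)"
    by (rule prod.cong) (auto simp: h_def swapt_sig)
  finally show ?thesis by simp
qed

lemma bbn_Sset: "bbn N lam t mu = inverse (\<Prod>(a, b)\<in>Sset N lam. t a - t b) * bb N lam t mu"
  unfolding bbn_def Sset_def by simp

lemma part2:
  assumes "1 \<le> j" "j < N" "length lam = N" "length mu = N"
  shows "sop j (bbn N lam) t mu = bbn N (swapl j lam) t mu"
proof -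
  have "sop j (bbn N lam) t mu = inverse (\<Prod>(a, b)\<in>Sset N lam. swapt j t a - swapt j t b) * sop j (bb N lam) t mu"
    unfolding sop_def bbn_Sset by (simp add: algebra_simps)
  also have "\<dots> = bbn N (swapl j lam) t mu"
    using part1[OF assms] prod_swap[OF assms(1-3), of t] by (simp add: bbn_Sset)
  finally show ?thesis .
qed

theorem proposition2p13:
  fixes N j :: nat and lam :: "bool list"
  assumes "N \<ge> 2" and "1 \<le> j" and "j \<le> N - 1" and "length lam = N"
  shows "(\<forall>t mu. length mu = N \<longrightarrow>
            sop j (bb N lam) t mu = bb N (swapl j lam) t mu)
       \<and> (\<forall>t mu. inj_on t {1..N} \<longrightarrow> length mu = N \<longrightarrow>
            sop j (bbn N lam) t mu = bbn N (swapl j lam) t mu)"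
proof -
  have j: "j < N" using assms by auto
  show ?thesis using part1[OF assms(2) j assms(4)] part2[OF assms(2) j assms(4)] by blast
qed

end
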